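(* For every integer $k\ge1$ there is a constant $C_k$ such that for $x\ge2$ \[ \sum_{n\le x}\frac{n^{k-1}}{\varphi(n)^k}=\mathfrak{S}_{(-k)}\log x+C_k+O_k\!\left(\frac{(\log x)^k}{x}\right), \] where $\mathfrak{S}_{(-k)}=\prod_p\left(1+\frac{(1-1/p)^{-k}-1}{p}\right)$.
   Context: $p$ denotes a prime and $\varphi$ is Euler's totient function. *)

theory Defs
  imports "HOL-Analysis.Analysis" "HOL-Number_Theory.Number_Theory"
begin

definition singular_series_neg :: "nat \<Rightarrow> real" where
  "singular_series_neg k =
     (\<Prod>n. if prime n then 1 + ((1 - 1 / real n) powi (- int k) - 1) / real n else 1)"

end

theory Submission
  imports Defs "HOL-Computational_Algebra.Squarefree" "HOL-Analysis.Analysis"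
begin


lemma pf_prod_primes:
  assumes "finite S" "\<And>p. p \<in> S \<Longrightarrow> prime (p::nat)"
  shows "prime_factorization (\<Prod>S) = mset_set S"
proof -
  have "prime_factorization (\<Prod>S) = prime_factorization (prod id S)" by simp
  also have "\<dots> = (\<Sum>p\<in>S. prime_factorization (id p))"
    using assms by (intro prime_factorization_prod) (auto dest: prime_gt_0_nat)
  also have "\<dots> = (\<Sum>p\<in>S. {#p#})"
    using assms by (intro sum.cong) (auto simp: prime_factorization_prime)
  also have "\<dots> = mset_set S" using assms(1) by (induction S rule: finite_induct) auto
  finally show ?thesis .
qed

lemma pfs_prod_primes:
  assumes "finite S" "\<And>p. p \<in> S \<Longrightarrow> prime (p::nat)"
  shows "prime_factors (\<Prod>S) = S"
  using pf_prod_primes[OF assms] assms(1) by simp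

lemma sqf_prod_primes:
  assumes "finite S" "\<And>p. p \<in> S \<Longrightarrow> prime (p::nat)"
  shows "squarefree (\<Prod>S)"
proof -
  have nz: "\<Prod>S \<noteq> 0" using assms by (auto dest: prime_gt_0_nat)
  show ?thesis
  proof (subst squarefree_factorial_semiring''[OF nz], intro allI impI)
    fix p :: nat assume "prime p"
    have "multiplicity p (\<Prod>S) = count (prime_factorization (\<Prod>S)) p"
      using \<open>prime p\<close> by (simp add: count_prime_factorization_prime)
    also have "\<dots> \<le> 1" using pf_prod_primes[OF assms] assms(1) by (simp add: count_mset_set')
    finally show "multiplicity p (\<Prod>S) \<le> 1" .
  qed
qed

lemma sqf_pos: "squarefree (d::nat) \<Longrightarrow> d > 0"
  by (cases d) auto

lemma prod_pf_sqf:
  assumes "squarefree (d::nat)"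
  shows "\<Prod>(prime_factors d) = d"
proof -
  have nz: "d \<noteq> 0" using sqf_pos[OF assms] by auto
  have "(\<Prod>p \<in> prime_factors d. p ^ multiplicity p d) = d"
    using prod_prime_factors[OF nz] by simp
  moreover have "(\<Prod>p \<in> prime_factors d. p ^ multiplicity p d) = \<Prod>(prime_factors d)"
    using assms nz by (intro prod.cong) (auto simp: squarefree_factorial_semiring')
  ultimately show ?thesis by simp
qed

lemma expand:
  fixes a :: "nat \<Rightarrow> real"
  assumes "finite P" "\<And>p. p \<in> P \<Longrightarrow> prime p"
  shows "(\<Prod>p\<in>P. 1 + a p) = (\<Sum>d\<in>{d. squarefree d \<and> prime_factors d \<subseteq> P}. \<Prod>p\<in>prime_factors d. a p)"
proof -
  have "(\<Prod>p\<in>P. 1 + a p) = (\<Prod>p\<in>P. a p + 1)" by (simp add: add.commute)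
  also have "\<dots> = (\<Sum>X\<in>Pow P. (\<Prod>p\<in>X. a p) * (\<Prod>p\<in>P-X. 1))"
    by (rule prod_add[OF assms(1)])
  also have "\<dots> = (\<Sum>X\<in>Pow P. (\<Prod>p\<in>X. a p))" by simp
  also have "\<dots> = (\<Sum>d\<in>{d. squarefree d \<and> prime_factors d \<subseteq> P}. \<Prod>p\<in>prime_factors d. a p)"
  proof (rule sum.reindex_bij_witness[where i = "\<lambda>d. prime_factors d" and j = "\<lambda>X. \<Prod>X"])
    fix X assume X: "X \<in> Pow P"
    hence fX: "finite X" using assms(1) finite_subset by auto
    have pX: "\<And>p. p \<in> X \<Longrightarrow> prime p" using X assms(2) by auto
    show "prime_factors (\<Prod>X) = X" by (rule pfs_prod_primes[OF fX pX])
    show "\<Prod>X \<in> {d. squarefree d \<and> prime_factors d \<subseteq> P}"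
      using sqf_prod_primes[OF fX pX] pfs_prod_primes[OF fX pX] X by auto
    show "(\<Prod>p\<in>prime_factors (\<Prod>X). a p) = (\<Prod>p\<in>X. a p)"
      by (simp add: pfs_prod_primes[OF fX pX])
  next
    fix d assume d: "d \<in> {d. squarefree d \<and> prime_factors d \<subseteq> P}"
    show "\<Prod>(prime_factors d) = d" using d prod_pf_sqf by auto
    show "prime_factors d \<in> Pow P" using d by auto
  qed
  finally show ?thesis .
qed

lemma sqf_dvd_iff:
  assumes "squarefree (d::nat)" "n > 0"
  shows "d dvd n \<longleftrightarrow> prime_factors d \<subseteq> prime_factors n"
proof
  assume "d dvd n" thus "prime_factors d \<subseteq> prime_factors n"
    using assms by (intro dvd_prime_factors) auto
next
  assume sub: "prime_factors d \<subseteq> prime_factors n"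
  have "prime_factorization d = mset_set (prime_factors d)"
    using pf_prod_primes[of "prime_factors d"] prod_pf_sqf[OF assms(1)] by auto
  also have "\<dots> \<subseteq># mset_set (prime_factors n)"
    using sub by (simp add: subset_imp_msubset_mset_set)
  also have "\<dots> \<subseteq># prime_factorization n" by (rule mset_set_set_mset_msubset)
  finally show "d dvd n" using assms sqf_pos[OF assms(1)]
    by (intro prime_factorization_subset_imp_dvd) auto
qed



definition gp :: "nat \<Rightarrow> nat \<Rightarrow> real" where "gp k p = (real p / (real p - 1))^k - 1"
definition gg :: "nat \<Rightarrow> nat \<Rightarrow> real" where
  "gg k d = (if squarefree d then \<Prod>p\<in>prime_factors d. gp k p else 0)"

lemma factA:
  assumes "n > 0" "k \<ge> 1"
  shows "real n ^ (k - 1) / real (totient n) ^ k = (\<Sum>d | d dvd n. gg k d) / real n"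
proof -
  let ?P = "prime_factors n"
  have pr: "\<And>p. p \<in> ?P \<Longrightarrow> prime p" by auto
  have p2: "\<And>p. p \<in> ?P \<Longrightarrow> real p \<ge> 2" using pr prime_ge_2_nat by fastforce
  have "real n ^ (k - 1) / real (totient n) ^ k
        = real n ^ (k-1) / (real n ^ k * (\<Prod>p\<in>?P. 1 - 1 / real p) ^ k)"
    by (simp add: totient_formula2 power_mult_distrib)
  also have "\<dots> = (1 / real n) * (\<Prod>p\<in>?P. (real p / (real p - 1)) ^ k)"
  proof -
    have "real n ^ k = real n * real n ^ (k-1)" using assms(2)
      by (metis Suc_diff_le diff_Suc_1 power_Suc)
    moreover have "(\<Prod>p\<in>?P. (real p / (real p - 1)) ^ k) = 1 / (\<Prod>p\<in>?P. 1 - 1 / real p) ^ k"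
    proof -
      have "(\<Prod>p\<in>?P. (real p / (real p - 1)) ^ k) = (\<Prod>p\<in>?P. 1 / (1 - 1 / real p) ^ k)"
      proof (intro prod.cong refl)
        fix p assume "p \<in> ?P"
        hence "real p \<ge> 2" using p2 by auto
        hence "1 - 1 / real p = (real p - 1) / real p" by (simp add: field_simps)
        thus "(real p / (real p - 1)) ^ k = 1 / (1 - 1 / real p) ^ k" by (simp add: power_divide)
      qed
      also have "\<dots> = 1 / (\<Prod>p\<in>?P. 1 - 1 / real p) ^ k"
        by (simp add: prod_dividef prod_power_distrib)
      finally show ?thesis .
    qed
    moreover have "real n ^ (k-1) \<noteq> 0" using assms by simp
    ultimately show ?thesis using assms by (simp add: field_simps)
  qed
  also have "(\<Prod>p\<in>?P. (real p / (real p - 1)) ^ k) = (\<Prod>p\<in>?P. 1 + gp k p)"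
    by (simp add: gp_def)
  also have "\<dots> = (\<Sum>d\<in>{d. squarefree d \<and> prime_factors d \<subseteq> ?P}. \<Prod>p\<in>prime_factors d. gp k p)"
    by (rule expand) auto
  also have "{d. squarefree d \<and> prime_factors d \<subseteq> ?P} = {d. d dvd n \<and> squarefree d}"
    using sqf_dvd_iff[OF _ assms(1)] by blast
  also have "(\<Sum>d\<in>{d. d dvd n \<and> squarefree d}. \<Prod>p\<in>prime_factors d. gp k p) = (\<Sum>d | d dvd n. gg k d)"
  proof -
    have fin: "finite {d. d dvd n}" using assms(1) by simp
    have "(\<Sum>d | d dvd n. gg k d) = (\<Sum>d\<in>{d. d dvd n \<and> squarefree d}. gg k d)"
      using fin by (intro sum.mono_neutral_right) (auto simp: gg_def)
    also have "\<dots> = (\<Sum>d\<in>{d. d dvd n \<and> squarefree d}. \<Prod>p\<in>prime_factors d. gp k p)"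
      by (intro sum.cong) (auto simp: gg_def)
    finally show ?thesis by simp
  qed
  finally show ?thesis by simp
qed

lemma div_Suc_cases:
  assumes "d > 0"
  shows "Suc N div d = (if d dvd Suc N then Suc (N div d) else N div d)"
  by (simp add: div_Suc dvd_eq_mod_eq_0)

lemma harm_0' [simp]: "harm 0 = 0" by (simp add: harm_def)

lemma factB:
  fixes g :: "nat \<Rightarrow> real"
  shows "(\<Sum>n\<in>{1..N}. (\<Sum>d | d dvd n. g d) / real n) = (\<Sum>d\<in>{1..N}. g d / real d * harm (N div d))"
proof (induction N)
  case 0 then show ?case by simp
next
  case (Suc N)
  have split: "{d. d dvd Suc N} = insert (Suc N) {d\<in>{1..N}. d dvd Suc N}"
  proof (intro equalityI subsetI)
    fix d assume "d \<in> {d. d dvd Suc N}"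
    hence dv: "d dvd Suc N" by simp
    hence "d \<le> Suc N" "d > 0" using dvd_imp_le by (auto intro!: Nat.gr0I)
    thus "d \<in> insert (Suc N) {d\<in>{1..N}. d dvd Suc N}" using dv by (cases "d = Suc N") auto
  qed auto
  have "(\<Sum>d\<in>{1..Suc N}. g d / real d * harm (Suc N div d))
      = (\<Sum>d\<in>{1..N}. g d / real d * harm (Suc N div d)) + g (Suc N) / real (Suc N)"
    by (simp add: sum.cl_ivl_Suc harm_Suc)
  also have "(\<Sum>d\<in>{1..N}. g d / real d * harm (Suc N div d))
      = (\<Sum>d\<in>{1..N}. g d / real d * harm (N div d) + (if d dvd Suc N then g d / real (Suc N) else 0))"
  proof (intro sum.cong refl)
    fix d assume d: "d \<in> {1..N}"
    show "g d / real d * harm (Suc N div d) = g d / real d * harm (N div d) + (if d dvd Suc N then g d / real (Suc N) else 0)"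
    proof (cases "d dvd Suc N")
      case True
      then obtain q where q: "Suc N = d * q" by auto
      have qq: "Suc (N div d) = q" using True d div_Suc_cases[of d N] q by simp
      have h0: "harm q = harm (N div d) + 1 / real q"
        unfolding qq[symmetric] harm_Suc by (simp add: divide_inverse)
      have "Suc N div d = q" using True d div_Suc_cases[of d N] qq by simp
      hence h: "harm (Suc N div d) = harm (N div d) + 1 / real q" using h0 by simp
      have dpos: "real d > 0" using d by auto
      have "g d / real d * (1 / real q) = g d / real (Suc N)"
        using q dpos by simp
      thus ?thesis using True h by (simp add: distrib_left)
    next
      case False then show ?thesis using d div_Suc_cases[of d N] by simp
    qed
  qed
  also have "\<dots> = (\<Sum>d\<in>{1..N}. g d / real d * harm (N div d)) + (\<Sum>d\<in>{d\<in>{1..N}. d dvd Suc N}. g d) / real (Suc N)"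
    by (simp add: sum.distrib sum.inter_filter[symmetric] sum_divide_distrib)
  finally have "(\<Sum>d\<in>{1..Suc N}. g d / real d * harm (Suc N div d)) =
     (\<Sum>d\<in>{1..N}. g d / real d * harm (N div d)) + (\<Sum>d | d dvd Suc N. g d) / real (Suc N)"
    by (simp add: split add_divide_distrib)
  then show ?case using Suc by simp
qed



lemma harm_b_mono: "harm n - ln (real n + 1) \<le> harm (n + j) - ln (real (n + j) + 1)"
proof (induction j)
  case 0 then show ?case by simp
next
  case (Suc j)
  have "ln (real (n + j) + 1 + 1) - ln (real (n + j) + 1) < 1 / (real (n + j) + 1)"
    by (rule ln_diff_le_inverse) simp
  hence "harm (n + j) - ln (real (n + j) + 1) \<le> harm (n + Suc j) - ln (real (n + Suc j) + 1)"
    by (simp add: harm_Suc field_simps)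
  then show ?case using Suc by linarith
qed

lemma harm_gamma_bounds:
  assumes "n \<ge> 1"
  shows "0 \<le> harm n - ln (real n) - euler_mascheroni"
    and "harm n - ln (real n) - euler_mascheroni \<le> 1 / real n"
proof -
  have "euler_mascheroni \<le> harm n - ln (real n)"
    using euler_mascheroni_LIMSEQ
    by (rule LIMSEQ_le_const2) (use assms in \<open>auto intro!: exI[of _ n] euler_mascheroni_sequence_decreasing\<close>)
  thus "0 \<le> harm n - ln (real n) - euler_mascheroni" by simp
  have "harm n - ln (real n + 1) \<le> euler_mascheroni"
  proof (rule LIMSEQ_le_const[OF euler_mascheroni_LIMSEQ], rule exI[of _ n], intro allI impI)
    fix m assume m: "m \<ge> n"
    have "harm n - ln (real n + 1) \<le> harm (n + (m - n)) - ln (real (n + (m - n)) + 1)"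
      by (rule harm_b_mono)
    also have "\<dots> = harm m - ln (real m + 1)" using m by simp
    also have "\<dots> \<le> harm m - ln (real m)" using m assms by simp
    finally show "harm n - ln (real n + 1) \<le> harm m - ln (real m)" .
  qed
  moreover have "ln (real n + 1) - ln (real n) < 1 / real n"
    by (rule ln_diff_le_inverse) (use assms in simp)
  ultimately show "harm n - ln (real n) - euler_mascheroni \<le> 1 / real n" by linarith
qed

lemma harm_floor_approx:
  fixes y :: real
  assumes "y \<ge> 1"
  shows "\<bar>harm (nat \<lfloor>y\<rfloor>) - ln y - euler_mascheroni\<bar> \<le> 2 / y"
proof -
  define n where "n = nat \<lfloor>y\<rfloor>"
  have f1: "1 \<le> \<lfloor>y\<rfloor>" using assms by simp
  hence n1: "n \<ge> 1" by (simp add: n_def le_nat_iff)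
  have ny: "real n \<le> y" "y < real n + 1" using assms f1 by (simp_all add: n_def)
  have npos: "real n > 0" using n1 by simp
  have l1: "0 \<le> ln y - ln (real n)" using ny npos by simp
  have "ln y - ln (real n) \<le> ln (real n + 1) - ln (real n)" using ny npos by simp
  also have "\<dots> < 1 / real n" by (rule ln_diff_le_inverse) (use n1 in simp)
  finally have l2: "ln y - ln (real n) \<le> 1 / real n" by simp
  have h1: "0 \<le> harm n - ln (real n) - euler_mascheroni"
    and h2: "harm n - ln (real n) - euler_mascheroni \<le> 1 / real n"
    using harm_gamma_bounds[OF n1] by auto
  have "\<bar>harm n - ln y - euler_mascheroni\<bar> \<le> 1 / real n" using l1 l2 h1 h2 by linarith
  also have "1 / real n \<le> 2 / y"
    using ny npos n1 assms by (simp add: field_simps) (use n1 in linarith)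
  finally show ?thesis by (simp add: n_def)
qed



lemma key_tele:
  fixes u s :: real
  assumes u: "u \<ge> 2" and s: "s > 0"
  shows "s * u powr (- 1 - s) + u powr (- s) \<le> (u - 1) powr (- s)"
proof -
  have u0: "u > 0" "u - 1 > 0" using u by auto
  have "ln ((u - 1) / u) \<le> (u - 1) / u - 1" using u0 by (intro ln_le_minus_one) simp
  also have "\<dots> = - 1 / u" using u0 by (simp add: field_simps)
  finally have "ln (u - 1) - ln u \<le> - 1 / u" using u0 by (simp add: ln_div)
  hence "1 / u \<le> ln u - ln (u - 1)" by linarith
  hence "s * (1 / u) \<le> s * (ln u - ln (u - 1))" using s by (intro mult_left_mono) auto
  hence "s / u \<le> s * (ln u - ln (u - 1))" by simp
  hence "exp (s / u) \<le> exp (s * ln u - s * ln (u - 1))" by (simp add: algebra_simps)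
  also have "\<dots> = u powr s / (u - 1) powr s" using u0 by (simp add: powr_def exp_diff)
  finally have e: "1 + s / u \<le> u powr s / (u - 1) powr s" using exp_ge_add_one_self[of "s / u"] by linarith
  have "s * u powr (- 1 - s) + u powr (- s) = u powr (- s) * (1 + s / u)"
    using u0 by (simp add: powr_diff powr_minus field_simps)
  also have "\<dots> \<le> u powr (- s) * (u powr s / (u - 1) powr s)"
    by (intro mult_left_mono e) simp
  also have "\<dots> = (u - 1) powr (- s)" using u0 by (simp add: powr_minus field_simps)
  finally show ?thesis .
qed

lemma zeta_partial_bound:
  fixes s :: real
  assumes s: "s > 0"
  shows "M \<ge> 1 \<Longrightarrow> (\<Sum>d\<in>{1..M}. real d powr (- 1 - s)) \<le> 1 + (1 - real M powr (- s)) / s"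
proof (induction M rule: dec_induct)
  case base then show ?case by simp
next
  case (step M)
  have "real (Suc M) \<ge> 2" using step by simp
  from key_tele[OF this s] have
    "s * real (Suc M) powr (- 1 - s) + real (Suc M) powr (- s) \<le> real M powr (- s)" by simp
  hence "real (Suc M) powr (- 1 - s) \<le> (real M powr (- s) - real (Suc M) powr (- s)) / s"
    using s by (simp add: field_simps)
  then show ?case using step by (simp add: sum.cl_ivl_Suc field_simps diff_divide_distrib)
qed

lemma zeta_partial_bound':
  fixes s :: real
  assumes s: "s > 0"
  shows "(\<Sum>d\<in>{1..M}. real d powr (- 1 - s)) \<le> 1 + 1 / s"
proof (cases "M \<ge> 1")
  case True
  have "(\<Sum>d\<in>{1..M}. real d powr (- 1 - s)) \<le> 1 + (1 - real M powr (- s)) / s"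
    by (rule zeta_partial_bound[OF s True])
  also have "\<dots> \<le> 1 + 1 / s" using s by (simp add: divide_right_mono)
  finally show ?thesis .
next
  case False then show ?thesis using s by simp
qed

lemma pow_quad:
  fixes w :: real
  assumes "0 \<le> w" "w \<le> 1"
  shows "(1 + w) ^ k \<le> 1 + real k * w + 3 ^ k * w^2"
proof (induction k)
  case 0 then show ?case by simp
next
  case (Suc k)
  have w3: "w^3 \<le> w^2" using assms by (simp add: power_decreasing)
  have k3: "real k \<le> 3 ^ k"
  proof -
    have "k < 3 ^ k" by (induction k) auto
    thus ?thesis by (metis less_imp_le of_nat_less_iff of_nat_numeral of_nat_power)
  qed
  have "(1 + w) ^ Suc k = (1 + w) * (1 + w) ^ k" by simp
  also have "\<dots> \<le> (1 + w) * (1 + real k * w + 3 ^ k * w^2)"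
    using Suc assms by (intro mult_left_mono) auto
  also have "\<dots> = 1 + real (Suc k) * w + (real k + 3 ^ k) * w^2 + 3 ^ k * w^3"
    by (simp add: algebra_simps power2_eq_square power3_eq_cube)
  also have "\<dots> \<le> 1 + real (Suc k) * w + (real k + 3 ^ k) * w^2 + 3 ^ k * w^2"
    using w3 by simp
  also have "\<dots> \<le> 1 + real (Suc k) * w + 3 ^ Suc k * w^2"
    using mult_right_mono[OF k3, of "w^2"] by (simp add: algebra_simps)
  finally show ?case .
qed

lemma prime_ineq:
  fixes p t :: real
  assumes p: "p \<ge> 2" and t: "0 < t" "t \<le> 1"
  shows "1 + ((p / (p - 1)) ^ k - 1) * t \<le> (1 + t / p) ^ k * (1 + 1 / p^2) ^ (2 * k + 4 * 3 ^ k)"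
proof -
  define y where "y = 1 / p"
  define w where "w = y + 2 * y^2"
  have y: "0 < y" "y \<le> 1 / 2" using p by (auto simp: y_def field_simps)
  have pw: "p / (p - 1) \<le> 1 + w"
  proof -
    have "p / (p - 1) = 1 / (1 - y)" using p by (simp add: y_def field_simps)
    also have "\<dots> \<le> 1 + w"
    proof -
      have "1 \<le> (1 + w) * (1 - y)" using y
        by (simp add: w_def algebra_simps power2_eq_square power3_eq_cube)
      thus ?thesis using y by (simp add: field_simps)
    qed
    finally show ?thesis .
  qed
  have "y * y \<le> y * (1/2)" using y by (intro mult_left_mono) auto
  hence yy: "y^2 \<le> y / 2" by (simp add: power2_eq_square)
  have w: "0 \<le> w" "w \<le> 1" "w \<le> 2 * y" using y yy
    by (auto simp: w_def)
  have ppos: "p / (p - 1) \<ge> 0" using p by simp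
  have a: "(p / (p - 1)) ^ k \<le> 1 + real k * w + 3 ^ k * w^2"
    using power_mono[OF pw ppos, of k] pow_quad[OF w(1,2), of k] by linarith
  have "1 + ((p / (p - 1)) ^ k - 1) * t \<le> 1 + (real k * w + 3 ^ k * w^2) * t"
    using a t by (intro add_left_mono mult_right_mono) auto
  also have "\<dots> \<le> 1 + real k * (t * w) + 3 ^ k * w^2"
    using t mult_left_le_one_le[of "w^2 * 3^k" t] by (simp add: algebra_simps)
  also have "\<dots> \<le> (1 + t * w) ^ k + 3 ^ k * w^2"
  proof -
    have "0 \<le> t * w" using t w by simp
    hence "1 + real k * (t * w) \<le> (1 + t * w) ^ k" by (intro Bernoulli_inequality) linarith
    thus ?thesis by simp
  qed
  also have "\<dots> \<le> (1 + t * w) ^ k * (1 + 3 ^ k * w^2)"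
  proof -
    have A: "1 \<le> (1 + t * w) ^ k" using t w by simp
    have "1 * (3 ^ k * w^2) \<le> (1 + t * w) ^ k * (3 ^ k * w^2)"
      by (rule mult_right_mono[OF A]) simp
    thus ?thesis by (simp add: algebra_simps)
  qed
  also have "\<dots> \<le> ((1 + t * y) * (1 + y^2) ^ 2) ^ k * (1 + y^2) ^ (4 * 3 ^ k)"
  proof -
    have e1: "(1 + t * y) * (1 + 2 * y^2) = 1 + t * w + (2 * y^2 * (1 - t) + 2 * t * y^3)"
      by (simp add: w_def algebra_simps power2_eq_square power3_eq_cube)
    have "0 \<le> 2 * y^2 * (1 - t) + 2 * t * y^3"
      by (intro add_nonneg_nonneg mult_nonneg_nonneg) (use t y in auto)
    hence "1 + t * w \<le> (1 + t * y) * (1 + 2 * y^2)" using e1 by linarith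
    also have "\<dots> \<le> (1 + t * y) * (1 + y^2) ^ 2"
      using t y by (intro mult_left_mono) (auto simp: power2_eq_square algebra_simps)
    finally have i1: "1 + t * w \<le> (1 + t * y) * (1 + y^2) ^ 2" .
    have i2: "(1 + t * w) ^ k \<le> ((1 + t * y) * (1 + y^2) ^ 2) ^ k"
      by (rule power_mono[OF i1]) (use t w in simp)
    have "1 + 3 ^ k * w^2 \<le> 1 + real (4 * 3 ^ k) * y^2"
    proof -
      have "w^2 \<le> (2 * y)^2" using w by (intro power_mono) auto
      thus ?thesis by (simp add: power_mult_distrib)
    qed
    also have "\<dots> \<le> (1 + y^2) ^ (4 * 3 ^ k)"
    proof (rule Bernoulli_inequality)
      have "0 \<le> y^2" by simp
      thus "- 1 \<le> y^2" by linarith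
    qed
    finally have i3: "1 + 3 ^ k * w^2 \<le> (1 + y^2) ^ (4 * 3 ^ k)" .
    show ?thesis
      by (rule mult_mono[OF i2 i3]) (use t w y in auto)
  qed
  also have "\<dots> = (1 + t / p) ^ k * (1 + 1 / p^2) ^ (2 * k + 4 * 3 ^ k)"
  proof -
    have "((1 + t * y) * (1 + y^2) ^ 2) ^ k * (1 + y^2) ^ (4 * 3 ^ k)
          = (1 + t * y) ^ k * (1 + y^2) ^ (2 * k + 4 * 3 ^ k)"
      by (simp add: power_mult_distrib power_add power_mult)
    moreover have "t * y = t / p" by (simp add: y_def)
    moreover have "y^2 = 1 / p^2" by (simp add: y_def power_divide)
    ultimately show ?thesis by simp
  qed
  finally show ?thesis .
qed



lemma gp_nonneg: "p \<ge> 2 \<Longrightarrow> gp k p \<ge> 0"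
  unfolding gp_def by (simp add: one_le_power)

lemma gg_nonneg: "gg k d \<ge> 0"
  unfolding gg_def
  by (auto intro!: prod_nonneg gp_nonneg prime_ge_2_nat dest: in_prime_factors_imp_prime)

lemma Dset_finite:
  assumes "finite P"
  shows "finite {d::nat. squarefree d \<and> prime_factors d \<subseteq> P}"
proof (rule finite_subset)
  show "{d::nat. squarefree d \<and> prime_factors d \<subseteq> P} \<subseteq> Prod ` Pow P"
  proof
    fix d :: nat assume "d \<in> {d. squarefree d \<and> prime_factors d \<subseteq> P}"
    hence "d = \<Prod>(prime_factors d)" "prime_factors d \<in> Pow P" using prod_pf_sqf by auto
    thus "d \<in> Prod ` Pow P" by blast
  qed
  show "finite (Prod ` Pow P)" using assms by simp
qed

lemma prod_powr_pf:
  assumes "squarefree d"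
  shows "(\<Prod>p\<in>prime_factors d. real p powr r) = real d powr r"
proof -
  have "(\<Prod>p\<in>prime_factors d. real p powr r) = (\<Prod>p\<in>prime_factors d. real p) powr r"
    by (simp add: prod_powr_distrib)
  also have "(\<Prod>p\<in>prime_factors d. real p) = real (\<Prod>(prime_factors d))" by simp
  also have "\<Prod>(prime_factors d) = d" by (rule prod_pf_sqf[OF assms])
  finally show ?thesis .
qed

lemma Q_bound:
  fixes s :: real
  assumes "finite P" "\<And>p. p \<in> P \<Longrightarrow> prime p" "s > 0"
  shows "(\<Prod>p\<in>P. 1 + real p powr (- 1 - s)) \<le> 1 + 1 / s"
proof -
  let ?D = "{d::nat. squarefree d \<and> prime_factors d \<subseteq> P}"
  have "(\<Prod>p\<in>P. 1 + real p powr (- 1 - s)) = (\<Sum>d\<in>?D. \<Prod>p\<in>prime_factors d. real p powr (- 1 - s))"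
    by (rule expand[OF assms(1,2)])
  also have "\<dots> = (\<Sum>d\<in>?D. real d powr (- 1 - s))"
    by (intro sum.cong refl prod_powr_pf) auto
  also have "\<dots> \<le> (\<Sum>d\<in>{1..\<Prod>P}. real d powr (- 1 - s))"
  proof (rule sum_mono2)
    show "?D \<subseteq> {1..\<Prod>P}"
    proof
      fix d assume d: "d \<in> ?D"
      have Ppos: "\<Prod>P > 0" using assms(1,2) by (auto intro!: prod_pos prime_gt_0_nat)
      have "d = \<Prod>(prime_factors d)" using d prod_pf_sqf by auto
      also have "\<dots> dvd \<Prod>P" using d assms(1) by (intro prod_dvd_prod_subset) auto
      finally have "d \<le> \<Prod>P" using Ppos by (intro dvd_imp_le) auto
      moreover have "d \<ge> 1" using d sqf_pos by (auto simp: Suc_le_eq)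
      ultimately show "d \<in> {1..\<Prod>P}" by simp
    qed
  qed auto
  also have "\<dots> \<le> 1 + 1 / s" by (rule zeta_partial_bound'[OF assms(3)])
  finally show ?thesis .
qed

abbreviation cexp :: "nat \<Rightarrow> nat" where "cexp k \<equiv> 2 * k + 4 * 3 ^ k"

lemma prod_bound:
  fixes \<sigma> :: real
  assumes "finite P" "\<And>p. p \<in> P \<Longrightarrow> prime p" "0 < \<sigma>" "\<sigma> \<le> 1"
  shows "(\<Prod>p\<in>P. 1 + gp k p * real p powr (- \<sigma>)) \<le> (1 + 1 / \<sigma>) ^ k * 2 ^ cexp k"
proof -
  have "(\<Prod>p\<in>P. 1 + gp k p * real p powr (- \<sigma>))
     \<le> (\<Prod>p\<in>P. (1 + real p powr (- 1 - \<sigma>)) ^ k * (1 + real p powr (- 1 - 1)) ^ cexp k)"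
  proof (rule prod_mono, rule conjI)
    fix p assume pP: "p \<in> P"
    hence p2: "real p \<ge> 2" using assms(2) prime_ge_2_nat by fastforce
    define t where "t = real p powr (- \<sigma>)"
    have tpos: "t > 0" using p2 by (simp add: t_def)
    have "real p powr \<sigma> \<ge> 1" using p2 assms(3) by (intro ge_one_powr_ge_zero) auto
    hence t1: "t \<le> 1" by (simp add: t_def powr_minus divide_le_eq_1 inverse_eq_divide) presburger
    show "0 \<le> 1 + gp k p * real p powr (- \<sigma>)"
      using gp_nonneg[of p k] p2 by (intro add_nonneg_nonneg mult_nonneg_nonneg) auto
    have "1 + gp k p * t \<le> (1 + t / real p) ^ k * (1 + 1 / (real p)^2) ^ cexp k"
      using prime_ineq[OF p2 tpos t1, of k] by (simp add: gp_def mult.commute)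
    also have "t / real p = real p powr (- 1 - \<sigma>)"
      using p2 by (simp add: t_def powr_diff powr_minus field_simps)
    also have "1 / (real p)^2 = real p powr (- 1 - 1)"
      using p2 by (simp add: powr_minus powr_numeral divide_inverse)
    finally show "1 + gp k p * real p powr (- \<sigma>) \<le> (1 + real p powr (- 1 - \<sigma>)) ^ k * (1 + real p powr (- 1 - 1)) ^ cexp k"
      by (simp add: t_def)
  qed
  also have "\<dots> = (\<Prod>p\<in>P. 1 + real p powr (- 1 - \<sigma>)) ^ k * (\<Prod>p\<in>P. 1 + real p powr (- 1 - 1)) ^ cexp k"
    by (simp add: prod.distrib prod_power_distrib)
  also have "\<dots> \<le> (1 + 1 / \<sigma>) ^ k * (1 + 1 / 1) ^ cexp k"
  proof -
    have n1: "0 \<le> (\<Prod>p\<in>P. 1 + real p powr (- 1 - \<sigma>))" by (intro prod_nonneg) (simp add: add_nonneg_nonneg)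
    have n2: "0 \<le> (\<Prod>p\<in>P. 1 + real p powr (- 1 - 1))" by (intro prod_nonneg) (simp add: add_nonneg_nonneg)
    have a1: "(\<Prod>p\<in>P. 1 + real p powr (- 1 - \<sigma>)) ^ k \<le> (1 + 1 / \<sigma>) ^ k"
      by (rule power_mono[OF Q_bound[OF assms(1,2) assms(3)] n1])
    have a2: "(\<Prod>p\<in>P. 1 + real p powr (- 1 - 1)) ^ cexp k \<le> (1 + 1 / 1) ^ cexp k"
    proof (rule power_mono[OF _ n2])
      show "(\<Prod>p\<in>P. 1 + real p powr (- 1 - 1)) \<le> 1 + 1 / 1"
        using Q_bound[OF assms(1,2) zero_less_one] by simp
    qed
    have n3: "0 \<le> (1 + 1 / \<sigma>) ^ k" using assms(3) by simp
    show ?thesis by (rule mult_mono[OF a1 a2 n3]) (use n2 in simp)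
  qed
  finally show ?thesis by simp
qed

lemma R_bound:
  fixes \<sigma> :: real
  assumes "0 < \<sigma>" "\<sigma> \<le> 1"
  shows "(\<Sum>d<n. gg k d * real d powr (- \<sigma>)) \<le> (1 + 1 / \<sigma>) ^ k * 2 ^ cexp k"
proof -
  define P where "P = {p. prime p \<and> p < n}"
  let ?D = "{d::nat. squarefree d \<and> prime_factors d \<subseteq> P}"
  have fP: "finite P" by (simp add: P_def)
  have prP: "\<And>p. p \<in> P \<Longrightarrow> prime p" by (simp add: P_def)
  have "(\<Sum>d<n. gg k d * real d powr (- \<sigma>)) = (\<Sum>d\<in>{d. d < n \<and> squarefree d}. gg k d * real d powr (- \<sigma>))"
    by (intro sum.mono_neutral_right) (auto simp: gg_def)
  also have "\<dots> \<le> (\<Sum>d\<in>?D. gg k d * real d powr (- \<sigma>))"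
  proof (rule sum_mono2)
    show "finite ?D" by (rule Dset_finite[OF fP])
    show "{d. d < n \<and> squarefree d} \<subseteq> ?D"
    proof safe
      fix d p assume d: "d < n" "squarefree d" and p: "p \<in> prime_factors d"
      have "p \<le> d" using p sqf_pos[OF d(2)] by (auto intro: dvd_imp_le)
      thus "p \<in> P" using d p by (auto simp: P_def)
    qed
    show "\<And>b. b \<in> ?D - {d. d < n \<and> squarefree d} \<Longrightarrow> 0 \<le> gg k b * real b powr - \<sigma>"
      using gg_nonneg by simp
  qed
  also have "\<dots> = (\<Sum>d\<in>?D. \<Prod>p\<in>prime_factors d. gp k p * real p powr (- \<sigma>))"
  proof (intro sum.cong refl)
    fix d assume "d \<in> ?D"
    hence sq: "squarefree d" by simp
    show "gg k d * real d powr (- \<sigma>) = (\<Prod>p\<in>prime_factors d. gp k p * real p powr (- \<sigma>))"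
      using sq by (simp add: gg_def prod.distrib prod_powr_pf)
  qed
  also have "\<dots> = (\<Prod>p\<in>P. 1 + gp k p * real p powr (- \<sigma>))"
    by (rule expand[OF fP prP, symmetric])
  also have "\<dots> \<le> (1 + 1 / \<sigma>) ^ k * 2 ^ cexp k" by (rule prod_bound[OF fP prP assms])
  finally show ?thesis .
qed

lemma R_summable:
  fixes \<sigma> :: real
  assumes "0 < \<sigma>" "\<sigma> \<le> 1"
  shows "summable (\<lambda>d. gg k d * real d powr (- \<sigma>))"
    and "(\<Sum>d. gg k d * real d powr (- \<sigma>)) \<le> (1 + 1 / \<sigma>) ^ k * 2 ^ cexp k"
proof -
  show s: "summable (\<lambda>d. gg k d * real d powr (- \<sigma>))"
  proof (rule bounded_imp_summable)
    show "\<And>n. 0 \<le> gg k n * real n powr (- \<sigma>)" using gg_nonneg by simp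
    fix n
    have "{..n} = {..<Suc n}" by auto
    hence "(\<Sum>d\<le>n. gg k d * real d powr (- \<sigma>)) = (\<Sum>d<Suc n. gg k d * real d powr (- \<sigma>))" by simp
    also have "\<dots> \<le> (1 + 1 / \<sigma>) ^ k * 2 ^ cexp k" by (rule R_bound[OF assms])
    finally show "(\<Sum>d\<le>n. gg k d * real d powr (- \<sigma>)) \<le> (1 + 1 / \<sigma>) ^ k * 2 ^ cexp k" .
  qed
  show "(\<Sum>d. gg k d * real d powr (- \<sigma>)) \<le> (1 + 1 / \<sigma>) ^ k * 2 ^ cexp k"
    by (rule suminf_le_const[OF s R_bound[OF assms]])
qed



lemma G_summable: "summable (\<lambda>d. gg k d / real d)"
proof -
  have "summable (\<lambda>d. gg k d * real d powr (- 1))" by (rule R_summable(1)) auto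
  moreover have "(\<lambda>d. gg k d * real d powr (- 1)) = (\<lambda>d. gg k d / real d)"
    by (auto simp: powr_minus divide_inverse)
  ultimately show ?thesis by simp
qed

lemma gg_prime: "prime p \<Longrightarrow> gg k p = gp k p"
  by (simp add: gg_def prime_prime_factors squarefree_prime)

lemma factor_eq:
  assumes "prime n"
  shows "1 + ((1 - 1 / real n) powi (- int k) - 1) / real n = 1 + gp k n / real n"
proof -
  have n2: "real n \<ge> 2" using prime_ge_2_nat[OF assms] by simp
  have "1 - 1 / real n = (real n - 1) / real n" using n2 by (simp add: field_simps)
  hence "(1 - 1 / real n) powi (- int k) = (real n / (real n - 1)) ^ k"
    by (simp add: power_int_minus power_divide)
  thus ?thesis by (simp add: gp_def)
qed

lemma euler_product:
  "singular_series_neg k = (\<Sum>d. gg k d / real d)"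
proof -
  define a where "a n = (if prime n then gp k n / real n else 0)" for n
  define G where "G d = gg k d / real d" for d
  have Gs: "summable G" unfolding G_def by (rule G_summable)
  have Gnn: "\<And>d. G d \<ge> 0" by (simp add: G_def gg_nonneg)
  have ann: "\<And>n. a n \<ge> 0" by (auto simp: a_def intro!: divide_nonneg_nonneg gp_nonneg prime_ge_2_nat)
  have aG: "\<And>n. a n \<le> G n" using Gnn by (auto simp: a_def G_def gg_prime)
  have as: "summable a"
    by (rule summable_comparison_test[OF _ Gs]) (use ann aG in auto)
  have def_eq: "singular_series_neg k = prodinf (\<lambda>n. 1 + a n)"
    unfolding singular_series_neg_def
    by (intro arg_cong[where f = prodinf] ext) (auto simp: a_def factor_eq)
  have cp: "convergent_prod (\<lambda>n. 1 + a n)"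
  proof (rule summable_imp_convergent_prod_real)
    show "summable (\<lambda>k. \<bar>a k\<bar>)" using as ann by (simp add: abs_of_nonneg)
    fix k show "a k \<noteq> -1" using ann[of k] by linarith
  qed
  have lim1: "(\<lambda>n. \<Prod>i\<le>n. 1 + a i) \<longlonglongrightarrow> prodinf (\<lambda>n. 1 + a n)"
    by (rule convergent_prod_LIMSEQ[OF cp])
  have part: "(\<Prod>i\<le>n. 1 + a i) = (\<Sum>d\<in>{d. squarefree d \<and> prime_factors d \<subseteq> {p. prime p \<and> p \<le> n}}. G d)" for n
  proof -
    define P where "P = {p. prime p \<and> p \<le> n}"
    have fP: "finite P" by (simp add: P_def)
    have prP: "\<And>p. p \<in> P \<Longrightarrow> prime p" by (simp add: P_def)
    have "(\<Prod>i\<le>n. 1 + a i) = (\<Prod>i\<in>P. 1 + a i)"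
      by (intro prod.mono_neutral_right) (auto simp: P_def a_def)
    also have "\<dots> = (\<Prod>p\<in>P. 1 + gp k p / real p)"
      by (intro prod.cong refl) (auto simp: P_def a_def)
    also have "\<dots> = (\<Sum>d\<in>{d. squarefree d \<and> prime_factors d \<subseteq> P}. \<Prod>p\<in>prime_factors d. gp k p / real p)"
      by (rule expand[OF fP prP])
    also have "\<dots> = (\<Sum>d\<in>{d. squarefree d \<and> prime_factors d \<subseteq> P}. G d)"
    proof (intro sum.cong refl)
      fix d assume "d \<in> {d. squarefree d \<and> prime_factors d \<subseteq> P}"
      hence sq: "squarefree d" by simp
      have "(\<Prod>p\<in>prime_factors d. gp k p / real p) = (\<Prod>p\<in>prime_factors d. gp k p) / (\<Prod>p\<in>prime_factors d. real p)"
        by (rule prod_dividef)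
      also have "(\<Prod>p\<in>prime_factors d. real p) = real d"
      proof -
        have "real (\<Prod>(prime_factors d)) = (\<Prod>p\<in>prime_factors d. real p)" by simp
        thus ?thesis using prod_pf_sqf[OF sq] by simp
      qed
      finally show "(\<Prod>p\<in>prime_factors d. gp k p / real p) = G d" using sq by (simp add: G_def gg_def)
    qed
    finally show ?thesis by (simp add: P_def)
  qed
  have lower: "(\<Sum>d<Suc n. G d) \<le> (\<Prod>i\<le>n. 1 + a i)" for n
  proof -
    define P where "P = {p. prime p \<and> p \<le> n}"
    let ?D = "{d::nat. squarefree d \<and> prime_factors d \<subseteq> P}"
    have fP: "finite P" by (simp add: P_def)
    have "(\<Sum>d<Suc n. G d) = (\<Sum>d\<in>{d. d < Suc n \<and> squarefree d}. G d)"
      by (intro sum.mono_neutral_right) (auto simp: G_def gg_def)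
    also have "\<dots> \<le> (\<Sum>d\<in>?D. G d)"
    proof (rule sum_mono2)
      show "finite ?D" by (rule Dset_finite[OF fP])
      show "{d. d < Suc n \<and> squarefree d} \<subseteq> ?D"
      proof safe
        fix d p assume d: "d < Suc n" "squarefree d" and p: "p \<in> prime_factors d"
        have "p \<le> d" using p sqf_pos[OF d(2)] by (auto intro: dvd_imp_le)
        thus "p \<in> P" using d p by (auto simp: P_def)
      qed
    qed (use Gnn in auto)
    finally show ?thesis using part[of n] by (simp add: P_def)
  qed
  have upper: "(\<Prod>i\<le>n. 1 + a i) \<le> suminf G" for n
  proof -
    have "finite {d. squarefree d \<and> prime_factors d \<subseteq> {p. prime p \<and> p \<le> n}}"
      by (rule Dset_finite) simp
    thus ?thesis using part[of n] by (simp add: sum_le_suminf[OF Gs] Gnn)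
  qed
  have lim2: "(\<lambda>n. \<Sum>d<Suc n. G d) \<longlonglongrightarrow> suminf G"
    using summable_LIMSEQ[OF Gs] by (rule LIMSEQ_Suc)
  have lim3: "(\<lambda>n. \<Prod>i\<le>n. 1 + a i) \<longlonglongrightarrow> suminf G"
    by (rule tendsto_sandwich[OF _ _ lim2 tendsto_const]) (use lower upper in auto)
  have "prodinf (\<lambda>n. 1 + a n) = suminf G" using LIMSEQ_unique[OF lim1 lim3] .
  moreover have "suminf G = (\<Sum>d. gg k d / real d)" unfolding G_def by simp
  ultimately show ?thesis using def_eq by simp
qed



lemma one_ln_le_sqrt:
  fixes u :: real
  assumes "u > 0"
  shows "1 + ln u \<le> 2 * sqrt u"
proof -
  have "ln (sqrt u) \<le> sqrt u - 1" using assms by (intro ln_le_minus_one) simp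
  moreover have "ln (sqrt u) = ln u / 2" using assms by (simp add: ln_sqrt)
  ultimately show ?thesis by linarith
qed

lemma Lf_summable: "summable (\<lambda>d. gg k d * ln (real d) / real d)"
proof (rule summable_comparison_test[OF _ summable_mult[OF R_summable(1)[of "1/2" k], of 2]])
  show "\<exists>N. \<forall>n\<ge>N. norm (gg k n * ln (real n) / real n) \<le> 2 * (gg k n * real n powr - (1 / 2))"
  proof (intro exI[of _ 1] allI impI)
    fix n :: nat assume n: "n \<ge> 1"
    hence n0: "real n > 0" by simp
    have g0: "gg k n \<ge> 0" by (rule gg_nonneg)
    have l0: "ln (real n) \<ge> 0" using n by simp
    have "ln (real n) \<le> 2 * sqrt (real n)" using one_ln_le_sqrt[OF n0] by linarith
    hence "ln (real n) / real n \<le> 2 * sqrt (real n) / real n" using n0 by (simp add: divide_right_mono)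
    also have "2 * sqrt (real n) / real n = 2 * real n powr - (1 / 2)"
    proof -
      have s0: "sqrt (real n) > 0" using n0 by simp
      have p: "real n powr - (1 / 2) = inverse (real n powr (1/2))" by (rule powr_minus)
      also have "real n powr (1/2) = sqrt (real n)" by (rule powr_half_sqrt) simp
      finally have p: "real n powr - (1 / 2) = inverse (sqrt (real n))" .
      have e: "sqrt (real n) * sqrt (real n) = real n" by simp
      have "sqrt (real n) / real n = inverse (sqrt (real n))"
        using s0 e by (metis divide_inverse inverse_inverse_eq mult_cancel_left nonzero_mult_div_cancel_left  divide_self_if less_irrefl)
      thus ?thesis using p by simp
    qed
    finally have "ln (real n) / real n \<le> 2 * real n powr - (1 / 2)" .
    hence "gg k n * (ln (real n) / real n) \<le> gg k n * (2 * real n powr - (1 / 2))"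
      using g0 by (intro mult_left_mono) auto
    hence A: "gg k n * ln (real n) / real n \<le> 2 * (gg k n * real n powr - (1 / 2))"
      by (simp add: algebra_simps)
    have B: "0 \<le> gg k n * ln (real n) / real n" using g0 l0 n0 by simp
    show "norm (gg k n * ln (real n) / real n) \<le> 2 * (gg k n * real n powr - (1 / 2))"
      unfolding real_norm_def abs_of_nonneg[OF B] by (rule A)
  qed
qed auto

lemma sum_lessSuc_split: "(\<Sum>i<Suc N. f i) = f 0 + (\<Sum>i\<in>{1..N}. (f i :: real))"
  by (induction N) (simp_all add: sum.cl_ivl_Suc)

lemma suminf_split_N:
  fixes f :: "nat \<Rightarrow> real"
  assumes "summable f" "f 0 = 0"
  shows "suminf f = (\<Sum>d\<in>{1..N}. f d) + (\<Sum>j. f (j + Suc N))"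
proof -
  have a: "suminf f = (\<Sum>j. f (j + Suc N)) + (\<Sum>i<Suc N. f i)"
    by (rule suminf_split_initial_segment[OF assms(1)])
  have b: "(\<Sum>i<Suc N. f i) = f 0 + (\<Sum>i\<in>{1..N}. f i)" by (rule sum_lessSuc_split)
  show ?thesis using a b assms(2) by linarith
qed



lemma floor_div_nat:
  assumes "x \<ge> 0" "d > 0"
  shows "nat \<lfloor>x / real d\<rfloor> = nat \<lfloor>x\<rfloor> div d"
proof -
  have "\<lfloor>x / real_of_int (int d)\<rfloor> = \<lfloor>x\<rfloor> div int d"
    by (rule floor_divide_real_eq_div) simp
  hence "\<lfloor>x / real d\<rfloor> = \<lfloor>x\<rfloor> div int d" by simp
  hence "nat \<lfloor>x / real d\<rfloor> = nat (\<lfloor>x\<rfloor> div int d)" by simp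
  also have "\<dots> = nat \<lfloor>x\<rfloor> div nat (int d)" using assms by (intro nat_div_distrib) simp
  finally show ?thesis by simp
qed

lemma head_term_bound:
  fixes x \<sigma> :: real and d :: nat
  assumes x: "x \<ge> 2" and d: "d \<ge> 1" "real d \<le> x" and \<sigma>: "\<sigma> \<ge> 0"
  shows "\<bar>gg k d / real d * (harm (nat \<lfloor>x / real d\<rfloor>) - ln (x / real d) - euler_mascheroni)\<bar>
         \<le> 2 * x powr \<sigma> / x * (gg k d * real d powr (- \<sigma>))"
proof -
  have d0: "real d > 0" using d by simp
  have y1: "x / real d \<ge> 1" using d d0 by simp
  have E: "\<bar>harm (nat \<lfloor>x / real d\<rfloor>) - ln (x / real d) - euler_mascheroni\<bar> \<le> 2 / (x / real d)"
    by (rule harm_floor_approx[OF y1])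
  have g0: "gg k d \<ge> 0" by (rule gg_nonneg)
  have "\<bar>gg k d / real d * (harm (nat \<lfloor>x / real d\<rfloor>) - ln (x / real d) - euler_mascheroni)\<bar>
      = gg k d / real d * \<bar>harm (nat \<lfloor>x / real d\<rfloor>) - ln (x / real d) - euler_mascheroni\<bar>"
    using g0 d0 by (simp add: abs_mult)
  also have "\<dots> \<le> gg k d / real d * (2 / (x / real d))"
    by (intro mult_left_mono E) (use g0 d0 in simp)
  also have "\<dots> = 2 / x * gg k d" using d0 x by (simp add: field_simps)
  also have "\<dots> \<le> 2 / x * (gg k d * (x / real d) powr \<sigma>)"
  proof -
    have "1 \<le> (x / real d) powr \<sigma>" using y1 \<sigma> by (intro ge_one_powr_ge_zero) auto
    hence "gg k d * 1 \<le> gg k d * (x / real d) powr \<sigma>" using g0 by (intro mult_left_mono) auto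
    thus ?thesis using x by (intro mult_left_mono) auto
  qed
  also have "(x / real d) powr \<sigma> = x powr \<sigma> * real d powr (- \<sigma>)"
  proof -
    have "(x / real d) powr \<sigma> = x powr \<sigma> / real d powr \<sigma>" by (rule powr_divide)
    thus ?thesis by (simp add: powr_minus divide_inverse)
  qed
  also have "2 / x * (gg k d * (x powr \<sigma> * real d powr (- \<sigma>))) = 2 * x powr \<sigma> / x * (gg k d * real d powr (- \<sigma>))"
    by (simp add: field_simps)
  finally show ?thesis .
qed

lemma tail_term_bound:
  fixes x \<sigma> :: real and d :: nat
  assumes x: "x \<ge> 2" and d: "real d > x" and \<sigma>: "\<sigma> \<ge> 0" "\<sigma> \<le> 1/2"
  shows "\<bar>(ln x + euler_mascheroni) * (gg k d / real d) - gg k d * ln (real d) / real d\<bar>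
         \<le> 2 * x powr \<sigma> / x * (gg k d * real d powr (- \<sigma>))"
proof -
  have d0: "real d > 0" using d x by simp
  define u where "u = real d / x"
  have u1: "u \<ge> 1" using d x by (simp add: u_def)
  have g0: "gg k d \<ge> 0" by (rule gg_nonneg)
  have lu: "ln u = ln (real d) - ln x" using d0 x by (simp add: u_def ln_div)
  have lu0: "ln u \<ge> 0" using u1 by simp
  have gam: "0 \<le> (euler_mascheroni::real)" "euler_mascheroni \<le> (1::real)"
    using euler_mascheroni_pos euler_mascheroni_less_13_over_22 by auto
  have "(ln x + euler_mascheroni) * (gg k d / real d) - gg k d * ln (real d) / real d
        = gg k d / real d * (euler_mascheroni - ln u)"
  proof -
    have ld: "ln (real d) = ln u + ln x" using lu by simp
    show ?thesis unfolding ld using d0 by (simp add: field_simps)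
  qed
  hence "\<bar>(ln x + euler_mascheroni) * (gg k d / real d) - gg k d * ln (real d) / real d\<bar>
        = gg k d / real d * \<bar>euler_mascheroni - ln u\<bar>"
    using g0 d0 by (simp add: abs_mult)
  also have "\<dots> \<le> gg k d / real d * (1 + ln u)"
    by (intro mult_left_mono) (use g0 d0 gam lu0 in auto)
  also have "\<dots> \<le> gg k d / real d * (2 * sqrt u)"
    by (intro mult_left_mono one_ln_le_sqrt) (use g0 d0 u1 in auto)
  also have "sqrt u = u powr (1/2)" using u1 by (simp add: powr_half_sqrt)
  also have "u powr (1/2) \<le> u powr (1 - \<sigma>)"
    using u1 \<sigma> by (intro powr_mono) auto
  hence "gg k d / real d * (2 * u powr (1/2)) \<le> gg k d / real d * (2 * u powr (1 - \<sigma>))"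
    by (intro mult_left_mono) (use g0 d0 in auto)
  also have "u powr (1 - \<sigma>) = real d powr (1 - \<sigma>) / x powr (1 - \<sigma>)"
    using d0 x by (simp add: u_def powr_divide)
  also have "real d powr (1 - \<sigma>) = real d / real d powr \<sigma>"
    using d0 by (simp add: powr_diff)
  also have "x powr (1 - \<sigma>) = x / x powr \<sigma>"
    using x by (simp add: powr_diff)
  also have "gg k d / real d * (2 * (real d / real d powr \<sigma> / (x / x powr \<sigma>)))
             = 2 * x powr \<sigma> / x * (gg k d * real d powr (- \<sigma>))"
    using d0 x by (simp add: powr_minus field_simps)
  finally show ?thesis by simp
qed



lemma main_est:
  fixes x :: real
  assumes k: "k \<ge> 1" and x: "x \<ge> 2"
  shows "\<bar>(\<Sum>n\<in>{1..nat \<lfloor>x\<rfloor>}. real n ^ (k - 1) / real (totient n) ^ k)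
      - ((\<Sum>d. gg k d / real d) * ln x + (euler_mascheroni * (\<Sum>d. gg k d / real d) - (\<Sum>d. gg k d * ln (real d) / real d)))\<bar>
      \<le> (4 * 6 ^ k * 2 ^ cexp k) * ln x ^ k / x"
proof -
  define N where "N = nat \<lfloor>x\<rfloor>"
  define G where "G d = gg k d / real d" for d
  define Lf where "Lf d = gg k d * ln (real d) / real d" for d
  define \<sigma> where "\<sigma> = 1 / (4 * ln x)"
  define H where "H d = gg k d * real d powr (- \<sigma>)" for d
  define K where "K = 2 * x powr \<sigma> / x"
  define E where "E d = harm (nat \<lfloor>x / real d\<rfloor>) - ln (x / real d) - euler_mascheroni" for d
  define c where "c = (euler_mascheroni :: real)"
  have lx: "ln x \<ge> 2/3"
  proof -
    have "ln 2 \<le> ln x" using x by simp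
    thus ?thesis using ln2_ge_two_thirds by linarith
  qed
  have \<sigma>0: "\<sigma> > 0" using lx by (simp add: \<sigma>_def)
  have \<sigma>1: "\<sigma> \<le> 1/2" using lx by (simp add: \<sigma>_def field_simps)
  have fl: "1 \<le> \<lfloor>x\<rfloor>" using x by simp
  have N1: "N \<ge> 1" using fl by (simp add: N_def le_nat_iff)
  have NX: "real N \<le> x" "x < real N + 1" using fl by (simp_all add: N_def)
  have Gs: "summable G" unfolding G_def by (rule G_summable)
  have Ls: "summable Lf" unfolding Lf_def by (rule Lf_summable)
  have Hs: "summable H" unfolding H_def by (rule R_summable(1)) (use \<sigma>0 \<sigma>1 in auto)
  have HB: "suminf H \<le> (1 + 1 / \<sigma>) ^ k * 2 ^ cexp k" unfolding H_def by (rule R_summable(2)) (use \<sigma>0 \<sigma>1 in auto)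
  have gg0: "gg k 0 = 0" by (simp add: gg_def)
  have G0: "G 0 = 0" and L0: "Lf 0 = 0" and H0: "H 0 = 0" by (simp_all add: G_def Lf_def H_def gg0)
  have Hnn: "\<And>d. H d \<ge> 0" by (simp add: H_def gg_nonneg)
  have s1: "(\<Sum>n\<in>{1..N}. real n ^ (k - 1) / real (totient n) ^ k) = (\<Sum>d\<in>{1..N}. G d * harm (N div d))"
  proof -
    have "(\<Sum>n\<in>{1..N}. real n ^ (k - 1) / real (totient n) ^ k) = (\<Sum>n\<in>{1..N}. (\<Sum>d | d dvd n. gg k d) / real n)"
      by (intro sum.cong refl factA) (use k in auto)
    also have "\<dots> = (\<Sum>d\<in>{1..N}. gg k d / real d * harm (N div d))" by (rule factB)
    finally show ?thesis by (simp add: G_def)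
  qed
  have s2: "G d * harm (N div d) = (ln x + c) * G d - Lf d + G d * E d" if d: "d \<in> {1..N}" for d
  proof -
    have d0: "real d > 0" using d by simp
    have "N div d = nat \<lfloor>x / real d\<rfloor>" unfolding N_def using x d by (intro floor_div_nat[symmetric]) auto
    hence h: "harm (N div d) = E d + ln (x / real d) + c" by (simp add: E_def c_def)
    have l: "ln (x / real d) = ln x - ln (real d)" using x d0 by (simp add: ln_div)
    show ?thesis unfolding h l using d0 by (simp add: G_def Lf_def field_simps)
  qed
  have s2': "(\<Sum>d\<in>{1..N}. G d * harm (N div d)) =
      (ln x + c) * (\<Sum>d\<in>{1..N}. G d) - (\<Sum>d\<in>{1..N}. Lf d) + (\<Sum>d\<in>{1..N}. G d * E d)"
  proof -
    have "(\<Sum>d\<in>{1..N}. G d * harm (N div d)) = (\<Sum>d\<in>{1..N}. (ln x + c) * G d - Lf d + G d * E d)"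
      by (rule sum.cong[OF refl s2])
    also have "\<dots> = (\<Sum>d\<in>{1..N}. (ln x + c) * G d) - (\<Sum>d\<in>{1..N}. Lf d) + (\<Sum>d\<in>{1..N}. G d * E d)"
      by (simp add: sum.distrib sum_subtractf)
    also have "(\<Sum>d\<in>{1..N}. (ln x + c) * G d) = (ln x + c) * (\<Sum>d\<in>{1..N}. G d)"
      by (simp add: sum_distrib_left)
    finally show ?thesis .
  qed
  define TG where "TG = (\<Sum>j. G (j + Suc N))"
  define TL where "TL = (\<Sum>j. Lf (j + Suc N))"
  define TT where "TT = (\<Sum>j. (ln x + c) * G (j + Suc N) - Lf (j + Suc N))"
  have SG: "suminf G = (\<Sum>d\<in>{1..N}. G d) + TG" unfolding TG_def by (rule suminf_split_N[OF Gs G0])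
  have SL: "suminf Lf = (\<Sum>d\<in>{1..N}. Lf d) + TL" unfolding TL_def by (rule suminf_split_N[OF Ls L0])
  have SH: "suminf H = (\<Sum>d\<in>{1..N}. H d) + (\<Sum>j. H (j + Suc N))" by (rule suminf_split_N[OF Hs H0])
  have Gs': "summable (\<lambda>j. G (j + Suc N))" by (rule summable_ignore_initial_segment[OF Gs])
  have Ls': "summable (\<lambda>j. Lf (j + Suc N))" by (rule summable_ignore_initial_segment[OF Ls])
  have Hs': "summable (\<lambda>j. H (j + Suc N))" by (rule summable_ignore_initial_segment[OF Hs])
  have TTeq: "TT = (ln x + c) * TG - TL"
  proof -
    have "(ln x + c) * TG = (\<Sum>j. (ln x + c) * G (j + Suc N))"
      unfolding TG_def by (rule suminf_mult[OF Gs', symmetric])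
    moreover have "(\<Sum>j. (ln x + c) * G (j + Suc N)) - TL = TT"
      unfolding TL_def TT_def by (rule suminf_diff[OF summable_mult[OF Gs'] Ls'])
    ultimately show ?thesis by simp
  qed
  define EE where "EE = (\<Sum>d\<in>{1..N}. G d * E d)"
  have main_eq: "(\<Sum>n\<in>{1..N}. real n ^ (k - 1) / real (totient n) ^ k)
      - (suminf G * ln x + (c * suminf G - suminf Lf)) = EE - TT"
    using s1 s2' SG SL TTeq unfolding EE_def by (simp add: algebra_simps)
  have EEb: "\<bar>EE\<bar> \<le> K * (\<Sum>d\<in>{1..N}. H d)"
  proof -
    have "\<bar>EE\<bar> \<le> (\<Sum>d\<in>{1..N}. \<bar>G d * E d\<bar>)" unfolding EE_def by (rule sum_abs)
    also have "\<dots> \<le> (\<Sum>d\<in>{1..N}. K * H d)"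
    proof (rule sum_mono)
      fix d assume d: "d \<in> {1..N}"
      have "real d \<le> x" using d NX by simp
      thus "\<bar>G d * E d\<bar> \<le> K * H d"
        using head_term_bound[OF x _ _ less_imp_le[OF \<sigma>0], of d k] d
        by (simp add: G_def E_def K_def H_def)
    qed
    also have "\<dots> = K * (\<Sum>d\<in>{1..N}. H d)" by (simp add: sum_distrib_left)
    finally show ?thesis .
  qed
  have TTb: "\<bar>TT\<bar> \<le> K * (\<Sum>j. H (j + Suc N))"
  proof -
    have tb: "\<bar>(ln x + c) * G (j + Suc N) - Lf (j + Suc N)\<bar> \<le> K * H (j + Suc N)" for j
    proof -
      have "real (j + Suc N) > x" using NX by simp
      thus ?thesis using tail_term_bound[OF x _ less_imp_le[OF \<sigma>0] \<sigma>1, of "j + Suc N" k]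
        by (simp add: G_def Lf_def K_def H_def c_def)
    qed
    have sa: "summable (\<lambda>j. \<bar>(ln x + c) * G (j + Suc N) - Lf (j + Suc N)\<bar>)"
      by (rule summable_comparison_test[OF _ summable_mult[OF Hs', of K]]) (use tb in auto)
    have "\<bar>TT\<bar> \<le> (\<Sum>j. \<bar>(ln x + c) * G (j + Suc N) - Lf (j + Suc N)\<bar>)"
      unfolding TT_def by (rule summable_rabs[OF sa])
    also have "\<dots> \<le> (\<Sum>j. K * H (j + Suc N))"
      by (rule suminf_le[OF tb sa summable_mult[OF Hs']])
    also have "\<dots> = K * (\<Sum>j. H (j + Suc N))" by (rule suminf_mult[OF Hs'])
    finally show ?thesis .
  qed
  have K0: "K \<ge> 0" using x by (simp add: K_def)
  have Kb: "K \<le> 4 / x"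
  proof -
    have "x powr \<sigma> = exp (\<sigma> * ln x)" using x by (simp add: powr_def)
    also have "\<sigma> * ln x = 1/4" using lx by (simp add: \<sigma>_def)
    also have "exp (1/4) \<le> exp (ln (2::real))"
    proof (subst exp_le_cancel_iff)
      show "1/4 \<le> ln (2::real)" using ln2_ge_two_thirds by linarith
    qed
    also have "exp (ln (2::real)) = 2" by simp
    finally have "x powr \<sigma> \<le> 2" .
    thus ?thesis using x by (simp add: K_def divide_right_mono)
  qed
  have Bb: "(1 + 1 / \<sigma>) ^ k \<le> 6 ^ k * ln x ^ k"
  proof -
    have "1 + 1 / \<sigma> = 1 + 4 * ln x" by (simp add: \<sigma>_def)
    also have "\<dots> \<le> 6 * ln x" using lx by simp
    finally have "(1 + 1 / \<sigma>) ^ k \<le> (6 * ln x) ^ k" by (intro power_mono) (use \<sigma>0 in auto)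
    thus ?thesis by (simp add: power_mult_distrib)
  qed
  have HH: "(\<Sum>d\<in>{1..N}. H d) + (\<Sum>j. H (j + Suc N)) \<le> 6 ^ k * ln x ^ k * 2 ^ cexp k"
  proof -
    have "(1 + 1 / \<sigma>) ^ k * 2 ^ cexp k \<le> 6 ^ k * ln x ^ k * 2 ^ cexp k"
      by (rule mult_right_mono[OF Bb]) simp
    thus ?thesis using SH HB by linarith
  qed
  have "\<bar>EE - TT\<bar> \<le> K * ((\<Sum>d\<in>{1..N}. H d) + (\<Sum>j. H (j + Suc N)))"
    using EEb TTb by (simp add: distrib_left)
  also have "\<dots> \<le> (4 / x) * (6 ^ k * ln x ^ k * 2 ^ cexp k)"
  proof (rule mult_mono[OF Kb HH])
    show "0 \<le> 4 / x" using x by simp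
    show "0 \<le> (\<Sum>d\<in>{1..N}. H d) + (\<Sum>j. H (j + Suc N))"
      using Hnn suminf_nonneg[OF Hs'] by (simp add: sum_nonneg)
  qed
  also have "\<dots> = (4 * 6 ^ k * 2 ^ cexp k) * ln x ^ k / x" by simp
  finally have fin: "\<bar>EE - TT\<bar> \<le> (4 * 6 ^ k * 2 ^ cexp k) * ln x ^ k / x" .
  have gE: "G = (\<lambda>d. gg k d / real d)" by (rule ext) (simp add: G_def)
  have lE: "Lf = (\<lambda>d. gg k d * ln (real d) / real d)" by (rule ext) (simp add: Lf_def)
  show ?thesis using main_eq fin unfolding gE lE N_def c_def by simp
qed


theorem mainTheorem6:
  fixes k :: nat
  assumes "k \<ge> 1"
  shows "\<exists>C M :: real. \<forall>x :: real. x \<ge> 2 \<longrightarrow>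
    \<bar>(\<Sum>n\<in>{1..nat \<lfloor>x\<rfloor>}. real n ^ (k - 1) / real (totient n) ^ k)
      - (singular_series_neg k * ln x + C)\<bar> \<le> M * (ln x) ^ k / x"
proof -
  define S where "S = (\<Sum>d. gg k d / real d)"
  define C where "C = euler_mascheroni * S - (\<Sum>d. gg k d * ln (real d) / real d)"
  show ?thesis
  proof (rule exI[of _ C], rule exI[of _ "4 * 6 ^ k * 2 ^ cexp k"], intro allI impI)
    fix x :: real assume x: "x \<ge> 2"
    show "\<bar>(\<Sum>n\<in>{1..nat \<lfloor>x\<rfloor>}. real n ^ (k - 1) / real (totient n) ^ k)
      - (singular_series_neg k * ln x + C)\<bar> \<le> (4 * 6 ^ k * 2 ^ cexp k) * (ln x) ^ k / x"
      using main_est[OF assms x] euler_product[of k] by (simp add: C_def S_def)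
  qed
qed

end
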